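(* In the setting described in the context, let $x\in\mathbb S^1_{\mathbb C}=\{x\in\mathbb C^2:\|x\|=1\}$ and $z=\pi(x)$. Then $$\log\|T^{\epsilon,\delta}_\sigma x\|=2\epsilon\frac{\mathrm{Re}(\beta_\sigma z)}{1+|z|^2}+\epsilon^2|\beta_\sigma|^2\frac{1+|z|^4}{(1+|z|^2)^2}+\delta\,q_{3,\sigma}\frac{1-|z|^2}{1+|z|^2}+2\epsilon^2\Big[\frac{\mathrm{Re}([\beta'_\sigma+\imath p_{3,\sigma}\beta_\sigma]z)}{1+|z|^2}-\frac{\mathrm{Re}(\beta_\sigma^2z^2)}{(1+|z|^2)^2}\Big]+\mathcal O(\epsilon^3,\epsilon\delta,\delta^2).$$
   Context: Notation: $J=\mathrm{diag}(1,-1)$; $\mathrm{SU}(1,1)=\{T:T^*JT=J,\det T=1\}$; $\mathrm{SU}_\le(1,1)=\{T:T^*JT\le J,\det T=1\}$; $\mathfrak{su}(1,1)=\{A:A^*J=-JA,\mathrm{Tr}A=0\}$ with basis $B_1=\begin{pmatrix}0&1\\1&0\end{pmatrix}$, $B_2=\begin{pmatrix}0&\imath\\-\imath&0\end{pmatrix}$, $B_3=\begin{pmatrix}\imath&0\\0&-\imath\end{pmatrix}$; $R_\eta=\mathrm{diag}(e^{\imath\eta},e^{-\imath\eta})$. The stereographic projection $\pi:\mathbb S^1_{\mathbb C}\to\overline{\mathbb C}$ is $\pi\binom ab=ab^{-1}$ if $b\ne0$ and $\infty$ if $b=0$. Setting: $(\Sigma,\mathbb P)$ a probability space; for real $(\epsilon,\delta)$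 near $(0,0)$ a random family $T^{\epsilon,\delta}_\sigma\in\mathrm{SL}(2,\mathbb C)$ with: (i) $C^2$ in $(\epsilon,\delta)$; (ii) $T^{0,0}_\sigma=R_{\eta_\sigma}$; (iii) $T^{\epsilon,0}_\sigma\in\mathrm{SU}(1,1)$; (iv) $T^{0,\imath\delta}_\sigma\in\mathrm{SU}(1,1)$; (v) $T^{\epsilon,\delta}_\sigma\in\mathrm{SU}_\le(1,1)$ for $\delta\ge0$; $T^{\epsilon,\delta}_\sigma=R_{\eta_\sigma}\exp[\epsilon P_\sigma+\epsilon^2P'_\sigma+\imath\delta Q_\sigma+\mathcal O(\epsilon^3,\epsilon\delta,\delta^2)]$ with $P_\sigma,P'_\sigma,Q_\sigma\in\mathfrak{su}(1,1)$ (vi) uniformly bounded and (vii) the error term bounded by $C(\epsilon^3+\epsilon\delta+\delta^2)$ uniformly; (viii) for $(\epsilon,\delta)\ne(0,0)$ no finite $F\subset\overline{\mathbb C}$ with $\mathrm{supp}(T^{\epsilon,\delta}_\sigma)\cdot F\subset F$; (ix) the generated semigroup is not relatively compact. Write $P_\sigma=\sum_jp_{j,\sigma}B_j$, $P'_\sigma=\sum_jp'_{j,\sigma}B_j$, $Q_\sigma=\sum_jq_{j,\sigma}B_j$ with real coefficients, $\beta_\sigma=p_{1,\sigma}-\imath p_{2,\sigma}$, $\beta'_\sigma=p'_{1,\sigma}-\imath p'_{2,\sigma}$. $\mathcal O(\cdot)$: bounded by a uniform constant times the sum of listed quantities. *)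

theory Defs
  imports "HOL-Analysis.Analysis" "HOL-Probability.Probability"
begin

type_synonym cmat = "complex^2^2"
type_synonym cvec = "complex^2"

definition mk2 :: "complex \<Rightarrow> complex \<Rightarrow> complex \<Rightarrow> complex \<Rightarrow> cmat" where
  "mk2 a b c d = vector [vector [a, b], vector [c, d]]"

definition cscale :: "complex \<Rightarrow> cmat \<Rightarrow> cmat" where
  "cscale c A = (\<chi> i j. c * A $ i $ j)"

definition Jm :: cmat where "Jm = mk2 1 0 0 (-1)"

definition madj :: "cmat \<Rightarrow> cmat" where
  "madj A = (\<chi> i j. cnj (A $ j $ i))"

definition hform :: "cmat \<Rightarrow> cvec \<Rightarrow> complex" where
  "hform M v = (\<Sum>i\<in>UNIV. cnj (v $ i) * (M *v v) $ i)"

definition mle :: "cmat \<Rightarrow> cmat \<Rightarrow> bool" where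
  "mle A B \<longleftrightarrow> madj (B - A) = B - A \<and> (\<forall>v. 0 \<le> Re (hform (B - A) v))"

definition SU11 :: "cmat set" where
  "SU11 = {T. madj T ** Jm ** T = Jm \<and> det T = 1}"

definition SU11_le :: "cmat set" where
  "SU11_le = {T. mle (madj T ** Jm ** T) Jm \<and> det T = 1}"

definition su11 :: "cmat set" where
  "su11 = {A. madj A ** Jm = - (Jm ** A) \<and> trace A = 0}"

definition B1 :: cmat where "B1 = mk2 0 1 1 0"
definition B2 :: cmat where "B2 = mk2 0 \<i> (-\<i>) 0"
definition B3 :: cmat where "B3 = mk2 \<i> 0 0 (-\<i>)"

definition Rot :: "real \<Rightarrow> cmat" where
  "Rot eta = mk2 (exp (\<i> * of_real eta)) 0 0 (exp (- \<i> * of_real eta))"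

primrec mpow :: "cmat \<Rightarrow> nat \<Rightarrow> cmat" where
  "mpow A 0 = mat 1"
| "mpow A (Suc n) = A ** mpow A n"

definition mexp :: "cmat \<Rightarrow> cmat" where
  "mexp A = (\<Sum>n. (1 / (fact n :: real)) *\<^sub>R mpow A n)"

text \<open>stereographic projection S^1_C \<rightarrow> extended complex plane; None represents \<infinity>\<close>
definition proj :: "cvec \<Rightarrow> complex option" where
  "proj v = (if v $ 2 = 0 then None else Some (v $ 1 / v $ 2))"

text \<open>Moebius action of a matrix on the extended complex plane, T\<cdot>\<pi>(x) = \<pi>(Tx)\<close>
definition moeb :: "cmat \<Rightarrow> complex option \<Rightarrow> complex option" where
  "moeb A w = (case w of None \<Rightarrow> proj (A *v vector [1, 0])
                        | Some z \<Rightarrow> proj (A *v vector [z, 1]))"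

definition supp_law :: "'s measure \<Rightarrow> ('s \<Rightarrow> cmat) \<Rightarrow> cmat set" where
  "supp_law P X = {A. \<forall>U. open U \<longrightarrow> A \<in> U \<longrightarrow> 0 < emeasure P {s \<in> space P. X s \<in> U}}"

inductive_set semigrp :: "cmat set \<Rightarrow> cmat set" for S where
  gen: "A \<in> S \<Longrightarrow> A \<in> semigrp S"
| mult: "A \<in> semigrp S \<Longrightarrow> B \<in> semigrp S \<Longrightarrow> A ** B \<in> semigrp S"

definition C2_on :: "(real \<times> real) set \<Rightarrow> (real \<times> real \<Rightarrow> cmat) \<Rightarrow> bool" where
  "C2_on U f \<longleftrightarrow> (\<exists>D D2.
      (\<forall>p\<in>U. (f has_derivative blinfun_apply (D p)) (at p)) \<and>
      (\<forall>p\<in>U. (D has_derivative blinfun_apply (D2 p)) (at p)) \<and>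
      continuous_on U D2)"

text \<open>main term of the expansion of log||T x||, as a function of z = \<pi>(x);
  at z = \<infinity> the (continuous) limiting value is used\<close>
definition lemma6_main ::
  "real \<Rightarrow> real \<Rightarrow> complex \<Rightarrow> complex \<Rightarrow> real \<Rightarrow> real \<Rightarrow> complex option \<Rightarrow> real" where
  "lemma6_main eps del beta beta' p3 q3 w =
    (case w of
      Some z \<Rightarrow>
        2 * eps * Re (beta * z) / (1 + (cmod z)^2)
        + eps^2 * (cmod beta)^2 * (1 + (cmod z)^4) / (1 + (cmod z)^2)^2
        + del * q3 * (1 - (cmod z)^2) / (1 + (cmod z)^2)
        + 2 * eps^2 * (Re ((beta' + \<i> * of_real p3 * beta) * z) / (1 + (cmod z)^2)
                       - Re (beta^2 * z^2) / (1 + (cmod z)^2)^2)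
    | None \<Rightarrow> eps^2 * (cmod beta)^2 - del * q3)"

end

theory Submission
  imports Defs
begin


lemma mk2_nth[simp]: "mk2 a b c d $ 1 $ 1 = a" "mk2 a b c d $ 1 $ 2 = b" "mk2 a b c d $ 2 $ 1 = c" "mk2 a b c d $ 2 $ 2 = d"
  by (simp_all add: mk2_def)

lemma mv_nth[simp]: "((M::cmat) *v v) $ i = M$i$1 * v$1 + M$i$2 * v$2"
  by (simp add: matrix_vector_mult_def sum_2)

lemma inner_cvec: "inner (x::cvec) y = Re (x$1 * cnj (y$1)) + Re (x$2 * cnj (y$2))"
  by (simp add: inner_vec_def sum_2 inner_complex_def)

lemma test:
  fixes x :: cvec and p1 p2 p3 :: real
  defines "P \<equiv> p1 *\<^sub>R B1 + p2 *\<^sub>R B2 + p3 *\<^sub>R B3"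
  shows "inner x (P *v x) = 2 * Re ((complex_of_real p1 - \<i> * complex_of_real p2) * x$1 * cnj (x$2))"
  unfolding P_def
  by (simp add: inner_cvec B1_def B2_def B3_def algebra_simps)


lemma main_poly:
  fixes a b beta beta' :: complex
  assumes n: "cmod a ^ 2 + cmod b ^ 2 = 1" and b: "b \<noteq> 0"
  shows "lemma6_main e d beta beta' p3 q3 (Some (a/b)) =
     2*e*Re(beta*(a*cnj b)) + e^2*(cmod beta)^2*(cmod a^4 + cmod b^4) + d*q3*(cmod b^2 - cmod a^2)
     + 2*e^2*(Re((beta' + \<i> * of_real p3*beta)*(a*cnj b)) - Re(beta^2*(a*cnj b)^2))"
proof -
  define nb where "nb = cmod b ^ 2"
  have nbp: "nb > 0" using b by (simp add: nb_def)
  have z: "a / b = (a * cnj b) / of_real nb"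
  proof -
    have "a / b = (a * cnj b) / (b * cnj b)" using b by (simp add: field_simps)
    also have "b * cnj b = of_real nb" unfolding nb_def by (rule complex_norm_square[symmetric])
    finally show ?thesis .
  qed
  have cz: "cmod (a/b) ^ 2 = cmod a ^ 2 / nb" by (simp add: nb_def norm_divide power_divide)
  have den: "1 + cmod (a/b) ^ 2 = 1 / nb" using n nbp unfolding cz nb_def by (simp add: field_simps)
  have cz4: "cmod (a/b) ^ 4 = (cmod a ^ 2 / nb)^2" using cz by (metis power_mult numeral_Bit0 mult_2_right power_add)
  have r1: "Re (c * (a/b)) = Re (c * (a*cnj b)) / nb" for c
    unfolding z by (simp add: Re_divide_of_real mult.assoc[symmetric])
  have r2: "Re (c * (a/b)^2) = Re (c * (a*cnj b)^2) / nb^2" for c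
    unfolding z by (simp add: power_divide Re_divide_of_real mult.assoc[symmetric] flip: of_real_power)
  have na: "cmod a ^ 2 = 1 - nb" using n nb_def by simp
  have a4: "cmod a ^ 4 = (1 - nb)^2" using na by (metis power_mult numeral_Bit0 mult_2_right power_add)
  have b4: "cmod b ^ 4 = nb^2" unfolding nb_def by (metis power_mult numeral_Bit0 mult_2_right power_add)
  show ?thesis
    unfolding a4 b4 lemma6_main_def option.case r1 r2 den cz4 cz
    using nbp unfolding na nb_def[symmetric]
    by (simp add: field_simps power2_eq_square)
qed


lemma T_dec_entries:
  "(p1 *\<^sub>R B1 + p2 *\<^sub>R B2 + p3 *\<^sub>R B3) = mk2 (\<i> * of_real p3) (of_real p1 + \<i> * of_real p2) (of_real p1 - \<i> * of_real p2) (- \<i> * of_real p3)"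
  by (simp add: B1_def B2_def B3_def mk2_def vec_eq_iff forall_2; simp add: scaleR_conv_of_real complex_eq_iff)

lemma cmod_sq: "cmod z ^ 2 = Re z ^ 2 + Im z ^ 2" by (simp add: cmod_power2)

lemma ident_poly:
  fixes x :: cvec and p1 p2 p3 p1' p2' p3' q1 q2 q3 e d :: real
  assumes n: "cmod (x$1)^2 + cmod (x$2)^2 = 1"
  defines "P \<equiv> p1 *\<^sub>R B1 + p2 *\<^sub>R B2 + p3 *\<^sub>R B3"
    and "P' \<equiv> p1' *\<^sub>R B1 + p2' *\<^sub>R B2 + p3' *\<^sub>R B3"
    and "Q \<equiv> q1 *\<^sub>R B1 + q2 *\<^sub>R B2 + q3 *\<^sub>R B3"
    and "beta \<equiv> complex_of_real p1 - \<i> * complex_of_real p2"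
    and "beta' \<equiv> complex_of_real p1' - \<i> * complex_of_real p2'"
  shows "(1/2) * ((2*e*inner x (P *v x) + 2*e^2*inner x (P' *v x) + 2*inner x (cscale (\<i> * of_real d) Q *v x)
            + e^2 * inner x (P *v (P *v x)) + e^2 * (norm (P *v x))^2) - (2*e*inner x (P *v x))^2/2)
    = 2*e*Re(beta*(x$1*cnj (x$2))) + e^2*(cmod beta)^2*(cmod (x$1)^4 + cmod (x$2)^4) + d*q3*(cmod (x$2)^2 - cmod (x$1)^2)
     + 2*e^2*(Re((beta' + \<i> * of_real p3*beta)*(x$1*cnj (x$2))) - Re(beta^2*(x$1*cnj (x$2))^2))"
proof -
  obtain a1 a2 b1 b2 where a: "x$1 = Complex a1 a2" and b: "x$2 = Complex b1 b2"
    by (metis complex.exhaust_sel)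
  have nn: "a1^2+a2^2+b1^2+b2^2 = 1" using n by (simp add: a b cmod_sq)
  have c4: "cmod z ^ 4 = (Re z ^ 2 + Im z ^ 2)^2" for z
    by (metis cmod_sq power_mult numeral_Bit0 mult_2_right)
  show ?thesis
    unfolding P_def P'_def Q_def T_dec_entries beta_def beta'_def power2_norm_eq_inner
    apply (simp add: inner_cvec inner_complex_def a b cmod_sq c4 cscale_def power2_eq_square algebra_simps)
    using nn apply algebra
    done
qed


lemma norm_cvec_sq: "norm (v::cvec) ^ 2 = cmod (v$1)^2 + cmod (v$2)^2"
  by (simp add: norm_vec_def L2_set_def sum_2)

lemma norm_cmat_sq: "norm (M::cmat) ^ 2 = norm (M$1)^2 + norm (M$2)^2"
  by (simp add: norm_vec_def[of M] L2_set_def sum_2)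

lemma norm_le_sum2: "norm (v::'a::real_normed_vector^2) \<le> norm (v$1) + norm (v$2)"
  by (simp add: norm_vec_def L2_set_def sum_2 sqrt_sum_squares_le_sum)

lemma entry_le: "cmod ((M::cmat)$i$j) \<le> norm M"
  by (rule order_trans[OF Finite_Cartesian_Product.norm_nth_le Finite_Cartesian_Product.norm_nth_le])

lemma mv_norm: "norm ((M::cmat) *v v) \<le> 4 * norm M * norm v"
proof -
  have c: "cmod ((M *v v)$i) \<le> 2 * norm M * norm v" for i
  proof -
    have "cmod ((M *v v)$i) \<le> cmod (M$i$1) * cmod (v$1) + cmod (M$i$2) * cmod (v$2)"
      unfolding mv_nth norm_mult[symmetric] by (rule norm_triangle_ineq)
    also have "\<dots> \<le> norm M * norm v + norm M * norm v"
      by (intro add_mono mult_mono[OF entry_le Finite_Cartesian_Product.norm_nth_le] norm_ge_zero)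
    finally show ?thesis by linarith
  qed
  have "norm (M *v v) \<le> cmod ((M *v v)$1) + cmod ((M *v v)$2)" by (rule norm_le_sum2)
  also have "\<dots> \<le> 4 * norm M * norm v" using c[of 1] c[of 2] by linarith
  finally show ?thesis .
qed

lemma mm_entry: "((M::cmat) ** N)$i$j = M$i$1 * N$1$j + M$i$2 * N$2$j"
  by (simp add: matrix_matrix_mult_def sum_2)

lemma mm_norm: "norm ((M::cmat) ** (N::cmat)) \<le> 8 * norm M * norm N"
proof -
  have c: "cmod ((M ** N)$i$j) \<le> 2 * norm M * norm N" for i j
  proof -
    have "cmod ((M ** N)$i$j) \<le> cmod (M$i$1) * cmod (N$1$j) + cmod (M$i$2) * cmod (N$2$j)"
      unfolding mm_entry norm_mult[symmetric] by (rule norm_triangle_ineq)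
    also have "\<dots> \<le> norm M * norm N + norm M * norm N"
      by (intro add_mono mult_mono[OF entry_le entry_le] norm_ge_zero)
    finally show ?thesis by linarith
  qed
  have r: "norm ((M ** N)$i) \<le> 4 * norm M * norm N" for i
  proof -
    have "norm ((M ** N)$i) \<le> cmod ((M ** N)$i$1) + cmod ((M ** N)$i$2)" by (rule norm_le_sum2)
    also have "\<dots> \<le> 4 * norm M * norm N" using c[of i 1] c[of i 2] by linarith
    finally show ?thesis .
  qed
  have "norm (M ** N) \<le> norm ((M ** N)$1) + norm ((M ** N)$2)" by (rule norm_le_sum2)
  also have "\<dots> \<le> 8 * norm M * norm N" using r[of 1] r[of 2] by linarith
  finally show ?thesis .
qed

lemma norm_mat1: "norm (mat 1 :: cmat) \<le> 2"
proof -
  have "norm (mat 1 :: cmat) \<le> norm ((mat 1 :: cmat)$1) + norm ((mat 1 :: cmat)$2)" by (rule norm_le_sum2)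
  also have "\<dots> \<le> 2"
    using norm_le_sum2[of "(mat 1 :: cmat)$1"] norm_le_sum2[of "(mat 1 :: cmat)$2"]
    by (simp add: mat_def)
  finally show ?thesis .
qed

lemma mpow_norm: "norm (mpow A n) \<le> 2 * (8 * norm A) ^ n"
proof (induction n)
  case 0 then show ?case using norm_mat1 by simp
next
  case (Suc n)
  have "norm (mpow A (Suc n)) \<le> 8 * norm A * norm (mpow A n)" using mm_norm by simp
  also have "\<dots> \<le> 8 * norm A * (2 * (8 * norm A) ^ n)"
    by (intro mult_left_mono Suc.IH) auto
  finally show ?case by (simp add: algebra_simps)
qed

lemma mexp_expand:
  assumes A: "norm (A::cmat) \<le> 1/16"
  shows "\<exists>R. mexp A = mat 1 + A + (1/2) *\<^sub>R (A ** A) + R \<and> norm R \<le> 2048 * norm A ^ 3"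
proof -
  define f where "f n = (1 / (fact n :: real)) *\<^sub>R mpow A n" for n
  define a where "a = 8 * norm A"
  have a0: "0 \<le> a" and a1: "a \<le> 1/2" using A by (auto simp: a_def)
  have fb: "norm (f n) \<le> 2 * a ^ n" for n
  proof -
    have "norm (f n) = (1 / fact n) * norm (mpow A n)" by (simp add: f_def)
    also have "\<dots> \<le> 1 * norm (mpow A n)"
      by (intro mult_right_mono) (auto simp: divide_le_eq_1)
    also have "\<dots> \<le> 2 * a ^ n" using mpow_norm[of A n] by (simp add: a_def)
    finally show ?thesis .
  qed
  have sg: "summable (\<lambda>n. 2 * a ^ n)" using a0 a1 by (intro summable_mult summable_geometric) auto
  have sf: "summable f" by (rule summable_comparison_test[OF _ sg]) (use fb in auto)
  have split: "suminf f = (\<Sum>n. f (n + 3)) + (\<Sum>i<3. f i)" by (rule suminf_split_initial_segment[OF sf])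
  have f0: "f 0 = mat 1" by (simp add: f_def)
  have f1: "f 1 = A" by (simp add: f_def)
  have f2: "f 2 = (1/2) *\<^sub>R (A ** A)" by (simp add: f_def numeral_2_eq_2)
  have first: "(\<Sum>i<3. f i) = mat 1 + A + (1/2) *\<^sub>R (A ** A)"
    by (simp add: numeral_3_eq_3 f0 f1[unfolded One_nat_def] f2[unfolded numeral_2_eq_2] del: One_nat_def)
  define R where "R = (\<Sum>n. f (n + 3))"
  have fb3: "norm (f (n+3)) \<le> 2 * a^3 * (1/2)^n" for n
  proof -
    have "norm (f (n+3)) \<le> 2 * a^(n+3)" by (rule fb)
    also have "\<dots> = 2 * a^3 * a^n" by (simp add: power_add)
    also have "\<dots> \<le> 2 * a^3 * (1/2)^n" using a0 a1 by (intro mult_left_mono power_mono) auto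
    finally show ?thesis .
  qed
  have sg2: "summable (\<lambda>n. 2 * a^3 * (1/2::real)^n)" by (intro summable_mult summable_geometric) auto
  have "norm R \<le> (\<Sum>n. 2 * a^3 * (1/2::real)^n)" unfolding R_def by (rule norm_suminf_le[OF fb3 sg2])
  also have "\<dots> = 4 * a^3" by (subst suminf_mult) (auto simp: suminf_geometric)
  also have "\<dots> = 2048 * norm A ^ 3" by (simp add: a_def power_mult_distrib)
  finally have "norm R \<le> 2048 * norm A ^ 3" .
  moreover have "mexp A = mat 1 + A + (1/2) *\<^sub>R (A ** A) + R"
  proof -
    have "mexp A = suminf f" unfolding mexp_def f_def by (rule refl)
    also have "\<dots> = R + (mat 1 + A + (1/2) *\<^sub>R (A ** A))" using split first R_def by simp
    finally show ?thesis by (simp only: add.commute)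
  qed
  ultimately show ?thesis by blast
qed


lemma poly_facts:
  fixes a b :: real
  assumes a: "0 \<le> a" "a \<le> 1" and b: "0 \<le> b" "b \<le> 1"
  defines "h \<equiv> a^3 + a*b + b^2"
  shows "(a+b)*(a^2+b) \<le> 2*h" "(a+b)^3 \<le> 4*h" "(a^2+b)^2 \<le> 2*h" "h \<le> 2*(a^2+b)"
        "a^2+b \<le> a+b" "a + b \<le> 2" "0 \<le> h" "h \<le> 3"
proof -
  have f1: "a^2*b \<le> a*b" using a b by (simp add: power2_eq_square mult_right_le_one_le mult_le_cancel_right1 mult_right_mono)
  have f2: "a*b^2 \<le> b^2" using a b by (simp add: mult_right_le_one_le mult_left_le_one_le)
  have f3: "b^3 \<le> b^2" using b by (simp add: power_decreasing)
  have f4: "a^4 \<le> a^3" using a by (simp add: power_decreasing)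
  have f5: "a^2 \<le> a" using a by (simp add: power2_eq_square mult_left_le_one_le)
  have f6: "b^2 \<le> b" using b by (simp add: power2_eq_square mult_left_le_one_le)
  have f7: "a^3 \<le> a^2" using a by (simp add: power_decreasing)
  have f8: "a*b \<le> b" using a b by (simp add: mult_left_le_one_le)
  have f9: "a*b \<le> a" using a b by (simp add: mult_right_le_one_le)
  have f10: "0 \<le> a*b" "0 \<le> a^3" "0 \<le> b^2" "0 \<le> a^2*b" using a b by auto
  have e1: "(a+b)*(a^2+b) = a^3 + a*b + a^2*b + b^2" by (simp add: algebra_simps power2_eq_square power3_eq_cube)
  show "(a+b)*(a^2+b) \<le> 2*h" unfolding h_def e1 using f1 f10 by (smt (verit))
  have e2: "(a+b)^3 = a^3 + 3*(a^2*b) + 3*(a*b^2) + b^3" by (simp add: algebra_simps power2_eq_square power3_eq_cube)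
  show "(a+b)^3 \<le> 4*h" unfolding h_def e2 using f1 f2 f3 f10 by (smt (verit))
  show "(a^2+b)^2 \<le> 2*h" unfolding h_def
  proof -
    have "(a^2+b)^2 = a^4 + 2*(a^2*b) + b^2" by (simp add: algebra_simps power2_eq_square power4_eq_xxxx)
    thus "(a^2+b)^2 \<le> 2*(a^3 + a*b + b^2)" using f1 f4 f10 by (smt (verit))
  qed
  show "h \<le> 2*(a^2+b)" unfolding h_def using f7 f8 f6 zero_le_power2[of a] by (smt (verit))
  show "a^2+b \<le> a+b" using f5 by (smt (verit))
  show "a + b \<le> 2" using a b by (smt (verit))
  show "0 \<le> h" unfolding h_def using f10 by (smt (verit))
  show "h \<le> 3" unfolding h_def using f7 f5 f8 f6 a b by (smt (verit))
qed


lemma ln_taylor2: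
  fixes t :: real assumes t: "\<bar>t\<bar> \<le> 1/2"
  shows "\<bar>ln (1 + t) - t + t^2/2\<bar> \<le> 2 * \<bar>t\<bar>^3"
proof -
  define f where "f u = ln (1 + u) - u + u^2/2" for u :: real
  have D: "DERIV f u :> u^2/(1+u)" if "-1/2 \<le> u" for u
  proof -
    have "DERIV f u :> (1 / (1 + u) - 1 + 2 * u / 2)"
      unfolding f_def using that
      by (auto intro!: derivative_eq_intros simp: field_simps)
    moreover have "1 / (1 + u) - 1 + 2 * u / 2 = u^2/(1+u)" using that
      by (simp add: field_simps power2_eq_square)
    ultimately show ?thesis by simp
  qed
  have f0: "f 0 = 0" by (simp add: f_def)
  have key: "\<bar>z^2/(1+z)\<bar> \<le> 2 * t^2" if "\<bar>z\<bar> \<le> \<bar>t\<bar>" for z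
  proof -
    have z1: "1 + z \<ge> 1/2" using that t by linarith
    have "\<bar>z^2/(1+z)\<bar> = z^2/(1+z)" using z1 by simp
    also have "\<dots> \<le> z^2/(1/2)" using z1 by (intro divide_left_mono) auto
    also have "\<dots> \<le> 2 * t^2" using that by (simp add: abs_le_square_iff)
    finally show ?thesis .
  qed
  have "\<bar>f t\<bar> \<le> 2 * \<bar>t\<bar>^3"
  proof (cases "t = 0")
    case True then show ?thesis using f0 by simp
  next
    case False
    show ?thesis
    proof (cases "t > 0")
      case True
      obtain z where z: "0 < z" "z < t" "f t - f 0 = (t - 0) * (z^2/(1+z))"
        using MVT2[of 0 t f "\<lambda>u. u^2/(1+u)"] True D t by auto
      have "\<bar>f t\<bar> = \<bar>t\<bar> * \<bar>z^2/(1+z)\<bar>" using z f0 by (simp add: abs_mult)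
      also have "\<dots> \<le> \<bar>t\<bar> * (2 * t^2)" using key[of z] z by (intro mult_left_mono) auto
      finally show ?thesis by (simp add: power2_eq_square power3_eq_cube abs_mult)
    next
      case False
      then have tn: "t < 0" using \<open>t \<noteq> 0\<close> by simp
      obtain z where z: "t < z" "z < 0" "f 0 - f t = (0 - t) * (z^2/(1+z))"
        using MVT2[of t 0 f "\<lambda>u. u^2/(1+u)"] tn D t by auto
      have "\<bar>f t\<bar> = \<bar>t\<bar> * \<bar>z^2/(1+z)\<bar>" using z f0 by (simp add: abs_mult)
      also have "\<dots> \<le> \<bar>t\<bar> * (2 * t^2)" using key[of z] z by (intro mult_left_mono) auto
      finally show ?thesis by (simp add: power2_eq_square power3_eq_cube abs_mult)
    qed
  qed
  then show ?thesis by (simp add: f_def)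
qed


lemma mv_addR: "(M::cmat) *v (v + w) = M *v v + M *v w"
  by (simp add: vec_eq_iff algebra_simps)

lemma mv_scaleR_L: "(c *\<^sub>R (M::cmat)) *v v = c *\<^sub>R (M *v v)"
  unfolding vec_eq_iff mv_nth vector_scaleR_component by (simp add: scaleR_conv_of_real algebra_simps)

lemma mv_scaleR_R: "(M::cmat) *v (c *\<^sub>R v) = c *\<^sub>R (M *v v)"
  unfolding vec_eq_iff mv_nth vector_scaleR_component by (simp add: scaleR_conv_of_real algebra_simps)

lemma norm_cscale: "norm (cscale c (M::cmat)) = cmod c * norm M"
proof -
  have row: "norm ((cscale c M)$i) = cmod c * norm (M$i)" for i
  proof -
    have "norm ((cscale c M)$i)^2 = (cmod c * norm (M$i))^2"
      by (simp add: norm_cvec_sq cscale_def norm_mult power_mult_distrib algebra_simps)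
    then show ?thesis by (rule power2_eq_imp_eq) auto
  qed
  have "norm (cscale c M)^2 = (cmod c * norm M)^2"
    unfolding norm_cmat_sq row by (simp add: power_mult_distrib norm_cmat_sq[of M] algebra_simps)
  then show ?thesis by (rule power2_eq_imp_eq) auto
qed

lemma rot_norm: "norm (Rot t *v v) = norm v"
proof -
  have "norm (Rot t *v v)^2 = norm v^2"
    by (simp add: norm_cvec_sq Rot_def norm_mult)
  then show ?thesis by (rule power2_eq_imp_eq) auto
qed

lemma nsq_add: "norm (a + b)^2 = norm a^2 + 2 * inner a b + norm (b::'a::real_inner)^2"
  by (simp add: power2_norm_eq_inner inner_add_left inner_add_right inner_commute)

lemma mono2: "0 \<le> (x::real) \<Longrightarrow> x \<le> a \<Longrightarrow> 0 \<le> y \<Longrightarrow> y \<le> b \<Longrightarrow> x*y \<le> a*b"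
  by (meson mult_mono order_trans)


lemma norm3: "norm (a + b + c) \<le> norm a + norm b + norm (c::'a::real_normed_vector)"
  using norm_triangle_ineq[of "a+b" c] norm_triangle_ineq[of a b] by linarith

lemma lin_aux1:
  assumes "(X::real) \<le> Z" "Y \<le> Z" "0 \<le> Z"
  shows "4*X + 1/2*(96*Y + 384*Y) + 2097152*Z \<le> 4*Z + 240*Z + 2097152*Z"
proof -
  have "1/2*(96*Y + 384*Y) = 240*Y" by simp
  then show ?thesis using assms by linarith
qed

lemma comb:
  fixes F R D a b c h :: real
  assumes "\<bar>F\<bar> \<le> a*h" "\<bar>R\<bar> \<le> b*h" "\<bar>D\<bar> \<le> c*h" "0 \<le> h" "0 \<le> b" "0 \<le> c"
  shows "\<bar>(F + R - D/2)/2\<bar> \<le> (a/2 + b + c) * h"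
proof -
  have e: "(a/2 + b + c) * h = (a*h)/2 + b*h + c*h" by (simp add: algebra_simps)
  have "0 \<le> b*h" "0 \<le> c*h" using assms by auto
  then show ?thesis unfolding e using assms(1-3) by (simp add: abs_le_iff)
qed

lemma core:
  fixes K C0 :: real
  assumes K: "0 \<le> K" and C0: "0 \<le> C0"
  shows "\<exists>C r. 0 < r \<and> r \<le> 1 \<and> (\<forall>P P' Q E (x::cvec) e d. norm P \<le> K \<longrightarrow> norm P' \<le> K \<longrightarrow> norm Q \<le> K \<longrightarrow>
     norm E \<le> C0 * (\<bar>e\<bar>^3 + \<bar>e\<bar> * \<bar>d\<bar> + d\<^sup>2) \<longrightarrow> norm x = 1 \<longrightarrow> \<bar>e\<bar> \<le> r \<longrightarrow> \<bar>d\<bar> \<le> r \<longrightarrow>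
     \<bar>ln (norm (mexp (e *\<^sub>R P + e\<^sup>2 *\<^sub>R P' + cscale (\<i> * of_real d) Q + E) *v x))
       - (1/2) * ((2*e*inner x (P *v x) + 2*e^2*inner x (P' *v x) + 2*inner x (cscale (\<i> * of_real d) Q *v x)
            + e^2 * inner x (P *v (P *v x)) + e^2 * (norm (P *v x))^2) - (2*e*inner x (P *v x))^2/2)\<bar>
     \<le> C * (\<bar>e\<bar>^3 + \<bar>e\<bar> * \<bar>d\<bar> + d\<^sup>2))"
proof -
  define L where "L = K + C0 + 1"
  have L1: "1 \<le> L" and KL: "K \<le> L" and CL: "C0 \<le> L" using K C0 by (auto simp: L_def)
  define cw where "cw = 2100000 * L^3"
  define cR where "cR = 256*L^3 + 512*L^4 + 82*L^2*cw + 3*cw^2"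
  define cT where "cT = 56*L^2 + 2*cR"
  define C where "C = 4*cT^3 + cR + 2*((48*L^2+2*cR)*(cT+8*L))"
  define r where "r = min 1 (min (1/(128*L)) (1/(4*cT)))"
  have L0: "0 < L" using L1 by simp
  have cw0: "0 \<le> cw" using L0 by (simp add: cw_def)
  have cR0: "0 \<le> cR" using L0 cw0 by (simp add: cR_def)
  have cT0: "0 < cT" using L0 cR0 by (simp add: cT_def add_pos_nonneg)
  have r0: "0 < r" using L0 cT0 by (simp add: r_def)
  have r1: "r \<le> 1" by (simp add: r_def)
  have rL: "r \<le> 1/(128*L)" and rT: "r \<le> 1/(4*cT)" by (simp_all add: r_def)
  have main: "\<bar>ln (norm (mexp (e *\<^sub>R P + e\<^sup>2 *\<^sub>R P' + cscale (\<i> * of_real d) Q + E) *v x))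
       - (1/2) * ((2*e*inner x (P *v x) + 2*e^2*inner x (P' *v x) + 2*inner x (cscale (\<i> * of_real d) Q *v x)
            + e^2 * inner x (P *v (P *v x)) + e^2 * (norm (P *v x))^2) - (2*e*inner x (P *v x))^2/2)\<bar>
     \<le> C * (\<bar>e\<bar>^3 + \<bar>e\<bar> * \<bar>d\<bar> + d\<^sup>2)"
    if nP: "norm P \<le> K" and nP': "norm P' \<le> K" and nQ: "norm Q \<le> K"
      and nE: "norm E \<le> C0 * (\<bar>e\<bar>^3 + \<bar>e\<bar> * \<bar>d\<bar> + d\<^sup>2)" and nx: "norm x = 1"
      and er: "\<bar>e\<bar> \<le> r" and dr: "\<bar>d\<bar> \<le> r"
    for P P' Q E x e d
  proof -
    define h where "h = \<bar>e\<bar>^3 + \<bar>e\<bar> * \<bar>d\<bar> + d\<^sup>2"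
    define al where "al = \<bar>e\<bar> + \<bar>d\<bar>"
    define be where "be = e^2 + \<bar>d\<bar>"
    have e1: "\<bar>e\<bar> \<le> 1" and d1: "\<bar>d\<bar> \<le> 1" using er dr r1 by auto
    have hd: "h = \<bar>e\<bar>^3 + \<bar>e\<bar> * \<bar>d\<bar> + \<bar>d\<bar>^2" by (simp add: h_def)
    note pf = poly_facts[OF abs_ge_zero e1 abs_ge_zero d1, folded hd, unfolded power2_abs]
    have ab: "al * be \<le> 2*h" and a3: "al^3 \<le> 4*h" and b2: "be^2 \<le> 2*h" and hb: "h \<le> 2*be"
      and ba: "be \<le> al" and a2: "al \<le> 2" and h0: "0 \<le> h" and h3: "h \<le> 3"
      using pf by (simp_all add: al_def be_def)
    have al0: "0 \<le> al" and be0: "0 \<le> be" by (auto simp: al_def be_def)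
    have Lne: "L \<noteq> 0" using L0 by simp
    have cTne: "cT \<noteq> 0" using cT0 by simp
    note nnsimp[simp] = al0 be0 h0 L0 cw0 cR0 cT0 less_imp_le[OF L0] Lne less_imp_le[OF cT0] cTne
    have eal: "\<bar>e\<bar> \<le> al" and dal: "\<bar>d\<bar> \<le> al" and e2be: "e^2 \<le> be" and dbe: "\<bar>d\<bar> \<le> be"
      by (auto simp: al_def be_def)
    have alr: "al \<le> 2*r" using er dr by (simp add: al_def)
    have ebe: "\<bar>e\<bar> * be \<le> 2*h" using ab mult_right_mono[OF eal be0] by linarith
    define px where "px = P *v x"
    define p'x where "p'x = P' *v x"
    define ppx where "ppx = P *v px"
    define Qd where "Qd = cscale (\<i> * of_real d) Q"
    define qx where "qx = Qd *v x"
    define G where "G = e\<^sup>2 *\<^sub>R P' + Qd + E"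
    define A where "A = e *\<^sub>R P + e\<^sup>2 *\<^sub>R P' + cscale (\<i> * of_real d) Q + E"
    have AG: "A = e *\<^sub>R P + G" by (simp add: A_def G_def Qd_def algebra_simps)
    define u' where "u' = e\<^sup>2 *\<^sub>R p'x + qx + (e\<^sup>2/2) *\<^sub>R ppx"
    define u where "u = e *\<^sub>R px + u'"
    have npx: "norm px \<le> 4*L" using mv_norm[of P x] nx nP KL by (simp add: px_def)
    have np'x: "norm p'x \<le> 4*L" using mv_norm[of P' x] nx nP' KL by (simp add: p'x_def)
    have nppx: "norm ppx \<le> 16*L^2"
    proof -
      have "norm ppx \<le> 4 * norm P * norm px" by (simp add: ppx_def mv_norm)
      also have "\<dots> \<le> 4 * L * (4*L)" using nP KL npx L0 by (intro mult_mono) auto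
      finally show ?thesis by (simp add: power2_eq_square)
    qed
    have nQd: "norm Qd \<le> L * \<bar>d\<bar>"
    proof -
      have "norm Qd = \<bar>d\<bar> * norm Q" by (simp add: Qd_def norm_cscale norm_mult)
      also have "\<dots> \<le> \<bar>d\<bar> * L" using nQ KL by (intro mult_left_mono) auto
      finally show ?thesis by (simp add: mult.commute)
    qed
    have nqx: "norm qx \<le> 4*L*\<bar>d\<bar>" using mv_norm[of Qd x] nx nQd by (simp add: qx_def)
    have nEb: "norm E \<le> L * h" using nE mult_right_mono[OF CL h0] by (simp add: h_def)
    have nEx: "norm (E *v x) \<le> 4*L*h" using mv_norm[of E x] nx nEb by simp
    have Lp: "L \<le> L^2" "L^2 \<le> L^3" "L \<le> L^3" "L^3 \<le> L^4" "1 \<le> L^2"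
      using L1 power_increasing[of 1 2 L] power_increasing[of 1 3 L] power_increasing[of 2 3 L] power_increasing[of 3 4 L]
      by (auto simp: one_le_power)
    have nG: "norm G \<le> 3*L*be"
    proof -
      have "norm G \<le> norm (e\<^sup>2 *\<^sub>R P') + norm Qd + norm E" unfolding G_def
        by (rule norm3)
      also have "\<dots> \<le> e^2 * L + L * \<bar>d\<bar> + L * h" using nP' KL nQd nEb
        by (intro add_mono) (auto intro: mult_left_mono)
      also have "\<dots> \<le> L * be + L * (2*be)"
      proof -
        have i1: "e^2 * L + L * \<bar>d\<bar> = L * be" by (simp add: be_def algebra_simps)
        have i3: "L * h \<le> L * (2*be)" using mult_left_mono[OF hb, of L] L0 by simp
        show ?thesis using i1 i3 by linarith
      qed
      finally show ?thesis by (simp add: algebra_simps)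
    qed
    have nA: "norm A \<le> 4*L*al"
    proof -
      have "norm A \<le> norm (e *\<^sub>R P) + norm G" unfolding AG by (rule norm_triangle_ineq)
      also have "\<dots> \<le> \<bar>e\<bar> * L + 3*L*be" using nP KL nG by (auto intro!: add_mono mult_left_mono)
      also have "\<dots> \<le> L * al + 3 * L * al" using eal ba L0 by (intro add_mono) (auto simp: mult.commute)
      finally show ?thesis by simp
    qed
    have nA16: "norm A \<le> 1/16"
    proof -
      have "4*L*al \<le> 4*L*(2*r)" using alr L0 by simp
      also have "\<dots> \<le> 4*L*(2*(1/(128*L)))" using rL L0 by (intro mult_left_mono) auto
      also have "\<dots> = 1/16" using L0 by (simp add: field_simps)
      finally show ?thesis using nA by simp
    qed
    obtain R where mexpA: "mexp A = mat 1 + A + (1/2) *\<^sub>R (A ** A) + R" and nR0: "norm R \<le> 2048 * norm A ^ 3"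
      using mexp_expand[OF nA16] by blast
    have nR: "norm R \<le> 524288 * L^3 * h"
    proof -
      have "norm A ^ 3 \<le> (4*L*al)^3" using nA by (intro power_mono) auto
      also have "\<dots> = 64 * L^3 * al^3" by (simp add: power_mult_distrib)
      also have "\<dots> \<le> 64 * L^3 * (4*h)" using a3 L0 by (intro mult_left_mono) auto
      finally show ?thesis using nR0 by simp
    qed
    define w where "w = E *v x + (1/2) *\<^sub>R (G *v (e *\<^sub>R px) + A *v (G *v x)) + R *v x"
    have Ax: "A *v x = e *\<^sub>R px + G *v x"
      by (simp add: AG px_def matrix_vector_mult_add_rdistrib mv_scaleR_L)
    have Gx: "G *v x = e\<^sup>2 *\<^sub>R p'x + qx + E *v x"
      by (simp add: G_def p'x_def qx_def matrix_vector_mult_add_rdistrib mv_scaleR_L)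
    have AAx: "A *v (A *v x) = e\<^sup>2 *\<^sub>R ppx + G *v (e *\<^sub>R px) + A *v (G *v x)"
    proof -
      have "A *v (A *v x) = A *v (e *\<^sub>R px) + A *v (G *v x)" by (simp add: Ax mv_addR)
      also have "A *v (e *\<^sub>R px) = e\<^sup>2 *\<^sub>R ppx + G *v (e *\<^sub>R px)"
        by (simp add: AG matrix_vector_mult_add_rdistrib mv_scaleR_L mv_scaleR_R ppx_def power2_eq_square scaleR_add_right)
      finally show ?thesis by simp
    qed
    have yexp: "mexp A *v x = x + u + w"
    proof -
      have "mexp A *v x = x + A *v x + (1/2) *\<^sub>R (A *v (A *v x)) + R *v x"
        by (simp add: mexpA matrix_vector_mult_add_rdistrib mv_scaleR_L matrix_vector_mul_assoc)
      also have "\<dots> = x + u + w"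
        unfolding AAx unfolding Ax Gx u_def u'_def w_def by (simp add: algebra_simps)
      finally show ?thesis .
    qed
    have nGepx: "norm (G *v (e *\<^sub>R px)) \<le> 96 * L^2 * h"
    proof -
      have "norm (G *v (e *\<^sub>R px)) \<le> 4 * norm G * norm (e *\<^sub>R px)" by (rule mv_norm)
      also have "\<dots> \<le> 4 * (3*L*be) * (\<bar>e\<bar> * (4*L))"
      proof -
        have "norm (e *\<^sub>R px) \<le> \<bar>e\<bar> * (4*L)" using npx by (simp add: mult_left_mono)
        then show ?thesis using nG L0 be0 by (intro mult_mono) auto
      qed
      also have "\<dots> = 48 * L^2 * (\<bar>e\<bar> * be)" by (simp add: power2_eq_square algebra_simps)
      also have "\<dots> \<le> 48 * L^2 * (2*h)" using ebe by (intro mult_left_mono) auto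
      finally show ?thesis by simp
    qed
    have nAGx: "norm (A *v (G *v x)) \<le> 384 * L^2 * h"
    proof -
      have "norm (A *v (G *v x)) \<le> 4 * norm A * norm (G *v x)" by (rule mv_norm)
      also have "\<dots> \<le> 4 * (4*L*al) * (4 * (3*L*be) * 1)"
        using nA mv_norm[of G x] nG nx L0 al0 be0 by (intro mult_mono mult_left_mono) auto
      also have "\<dots> = 192 * L^2 * (al * be)" by (simp add: power2_eq_square algebra_simps)
      also have "\<dots> \<le> 192 * L^2 * (2*h)" using ab by (intro mult_left_mono) auto
      finally show ?thesis by simp
    qed
    have nRx: "norm (R *v x) \<le> 2097152 * L^3 * h" using mv_norm[of R x] nx nR by simp
    have nw: "norm w \<le> cw * h"
    proof -
      have "norm w \<le> norm (E *v x) + (1/2) * (norm (G *v (e *\<^sub>R px)) + norm (A *v (G *v x))) + norm (R *v x)"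
      proof -
        have "norm ((1/2) *\<^sub>R (G *v (e *\<^sub>R px) + A *v (G *v x))) \<le> (1/2) * (norm (G *v (e *\<^sub>R px)) + norm (A *v (G *v x)))"
          by (simp add: norm_triangle_ineq)
        then show ?thesis unfolding w_def using norm3[of "E *v x" "(1/2) *\<^sub>R (G *v (e *\<^sub>R px) + A *v (G *v x))" "R *v x"]
          by linarith
      qed
      also have "\<dots> \<le> 4*L*h + (1/2) * (96 * L^2 * h + 384 * L^2 * h) + 2097152 * L^3 * h"
        using nEx nGepx nAGx nRx by (intro add_mono mult_left_mono) auto
      also have "\<dots> \<le> 4*L^3*h + 240 * L^3 * h + 2097152 * L^3 * h"
        using mult_right_mono[OF Lp(3) h0] mult_right_mono[OF Lp(2) h0] mult_nonneg_nonneg[OF zero_le_power[OF less_imp_le[OF L0]] h0, of 3]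
        by (simp only: mult.assoc) (rule lin_aux1)
      also have "\<dots> \<le> cw * h" using h0 L0 by (simp add: cw_def algebra_simps)
      finally show ?thesis .
    qed
    have nu': "norm u' \<le> 16 * L^2 * be"
    proof -
      have "norm u' \<le> norm (e\<^sup>2 *\<^sub>R p'x) + norm qx + norm ((e\<^sup>2/2) *\<^sub>R ppx)"
        unfolding u'_def by (rule norm3)
      also have "\<dots> = e^2 * norm p'x + norm qx + (e^2/2) * norm ppx" by simp
      also have "\<dots> \<le> e^2 * (4*L) + 4*L*\<bar>d\<bar> + (e^2/2) * (16*L^2)"
        by (intro add_mono mult_left_mono np'x nqx nppx) simp_all
      also have "\<dots> \<le> e^2 * (4*L^2) + 4*L^2*\<bar>d\<bar> + (e^2/2) * (16*L^2)"
      proof -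
        have m1: "e^2*(4*L) \<le> e^2*(4*L^2)" using Lp(1) by (intro mult_left_mono) auto
        have m2: "4*L*\<bar>d\<bar> \<le> 4*L^2*\<bar>d\<bar>" using Lp(1) by (intro mult_right_mono) auto
        show ?thesis by (intro add_mono m1 m2 order_refl)
      qed
      also have "\<dots> = 12 * (L^2 * e^2) + 4 * (L^2 * \<bar>d\<bar>)" by (simp add: algebra_simps)
      also have "\<dots> \<le> 16 * (L^2 * e^2) + 16 * (L^2 * \<bar>d\<bar>)" by (intro add_mono mult_right_mono) auto
      also have "\<dots> = 16 * L^2 * be" by (simp add: be_def algebra_simps)
      finally show ?thesis .
    qed
    have CSx: "\<bar>inner x v\<bar> \<le> norm v" for v using Cauchy_Schwarz_ineq2[of x v] nx by simp
    define tau where "tau = 2 * inner x u + e^2 * (norm px)^2"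
    define tau1 where "tau1 = 2 * e * inner x px"
    define rho where "rho = 2 * e * inner px u' + (norm u')^2 + 2 * inner (x + u) w + (norm w)^2"
    have ysq: "(norm (mexp A *v x))^2 = 1 + tau + rho"
    proof -
      have s1: "norm (x + u + w)^2 = norm (x+u)^2 + 2 * inner (x+u) w + norm w^2" by (rule nsq_add)
      have s2: "norm (x+u)^2 = 1 + 2 * inner x u + norm u^2" using nsq_add[of x u] nx by simp
      have s3: "norm u^2 = e^2 * norm px^2 + 2 * e * inner px u' + norm u'^2"
        unfolding u_def using nsq_add[of "e *\<^sub>R px" u'] by (simp add: power_mult_distrib)
      show ?thesis unfolding yexp s1 s2 s3 tau_def rho_def by simp
    qed
    have tauT: "tau = 2*e*inner x px + 2*e^2*inner x p'x + 2*inner x qx + e^2*inner x ppx + e^2*(norm px)^2"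
      by (simp add: tau_def u_def u'_def inner_add_right algebra_simps)
    have tt1: "tau - tau1 = 2 * inner x u' + e^2 * (norm px)^2"
      by (simp add: tau_def tau1_def u_def inner_add_right algebra_simps)
    have npx2: "(norm px)^2 \<le> 16 * L^2"
    proof -
      have "(norm px)^2 \<le> (4*L)^2" using npx by (intro power_mono) auto
      then show ?thesis by (simp add: power_mult_distrib)
    qed
    have btau1: "\<bar>tau1\<bar> \<le> 8 * L * al"
    proof -
      have "\<bar>tau1\<bar> = 2 * \<bar>e\<bar> * \<bar>inner x px\<bar>" by (simp add: tau1_def abs_mult)
      also have "\<dots> \<le> 2 * al * (4*L)" using CSx[of px] npx eal by (intro mult_mono) auto
      finally show ?thesis by (simp add: mult_ac)
    qed
    have btt1: "\<bar>tau - tau1\<bar> \<le> 48 * L^2 * be"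
    proof -
      have "\<bar>tau - tau1\<bar> \<le> 2 * \<bar>inner x u'\<bar> + e^2 * (norm px)^2" unfolding tt1
        using abs_triangle_ineq[of "2 * inner x u'" "e^2 * (norm px)^2"] by (simp add: abs_mult)
      also have "\<dots> \<le> 2 * (16 * L^2 * be) + be * (16 * L^2)"
        using CSx[of u'] nu' npx2 e2be by (intro add_mono mult_mono) auto
      finally show ?thesis by (simp add: mult_ac)
    qed
    have nu: "norm u \<le> 36 * L^2"
    proof -
      have "norm u \<le> \<bar>e\<bar> * norm px + norm u'" unfolding u_def using norm_triangle_ineq[of "e *\<^sub>R px" u'] by simp
      also have "\<dots> \<le> 1 * (4*L) + 16 * L^2 * 2"
      proof -
        have "16 * L^2 * be \<le> 16 * L^2 * 2" using ba a2 by (intro mult_left_mono) auto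
        hence "norm u' \<le> 16 * L^2 * 2" using nu' by linarith
        moreover have "\<bar>e\<bar> * norm px \<le> 1 * (4*L)" using e1 npx by (intro mult_mono) auto
        ultimately show ?thesis by linarith
      qed
      also have "\<dots> \<le> 36 * L^2" using Lp(1) by simp
      finally show ?thesis .
    qed
    have nxu: "norm (x + u) \<le> 41 * L^2"
      using norm_triangle_ineq[of x u] nx nu Lp(5) by simp
    have brho: "\<bar>rho\<bar> \<le> cR * h"
    proof -
      have r1: "\<bar>2 * e * inner px u'\<bar> \<le> 256 * L^3 * h"
      proof -
        have "\<bar>2 * e * inner px u'\<bar> \<le> 2 * \<bar>e\<bar> * (norm px * norm u')"
          using Cauchy_Schwarz_ineq2[of px u'] by (simp add: abs_mult mult_left_mono)
        also have "\<dots> \<le> 2 * \<bar>e\<bar> * (4*L * (16 * L^2 * be))"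
          using npx nu' by (intro mult_left_mono mult_mono) auto
        also have "\<dots> = 128 * L^3 * (\<bar>e\<bar> * be)" by (simp add: power2_eq_square power3_eq_cube algebra_simps)
        also have "\<dots> \<le> 128 * L^3 * (2 * h)" using ebe L0 by (intro mult_left_mono) auto
        finally show ?thesis by (simp add: mult_ac)
      qed
      have r2: "(norm u')^2 \<le> 512 * L^4 * h"
      proof -
        have "(norm u')^2 \<le> (16 * L^2 * be)^2" using nu' by (intro power_mono) auto
        also have "\<dots> = 256 * L^4 * be^2" by (simp add: power_mult_distrib power2_eq_square power4_eq_xxxx)
        also have "\<dots> \<le> 256 * L^4 * (2*h)" using b2 L0 by (intro mult_left_mono) auto
        finally show ?thesis by (simp add: mult_ac)
      qed
      have r3: "\<bar>2 * inner (x + u) w\<bar> \<le> 82 * L^2 * cw * h"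
      proof -
        have "\<bar>2 * inner (x + u) w\<bar> \<le> 2 * (norm (x + u) * norm w)"
          using Cauchy_Schwarz_ineq2[of "x+u" w] by (simp add: abs_mult)
        also have "\<dots> \<le> 2 * (41 * L^2 * (cw * h))" using nxu nw by (intro mult_left_mono mult_mono) auto
        finally show ?thesis by (simp add: algebra_simps)
      qed
      have r4: "(norm w)^2 \<le> 3 * cw^2 * h"
      proof -
        have "(norm w)^2 \<le> (cw * h)^2" using nw by (intro power_mono) auto
        also have "\<dots> = cw^2 * h * h" by (simp add: power2_eq_square)
        also have "\<dots> \<le> cw^2 * h * 3" using h3 h0 cw0 by (intro mult_left_mono) auto
        finally show ?thesis by (simp add: algebra_simps)
      qed
      have "\<bar>rho\<bar> \<le> \<bar>2 * e * inner px u'\<bar> + (norm u')^2 + \<bar>2 * inner (x + u) w\<bar> + (norm w)^2"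
        unfolding rho_def by (smt (verit) abs_triangle_ineq zero_le_power2)
      also have "\<dots> \<le> 256 * L^3 * h + 512 * L^4 * h + 82 * L^2 * cw * h + 3 * cw^2 * h"
        using r1 r2 r3 r4 by (intro add_mono)
      also have "\<dots> = cR * h" by (simp add: cR_def algebra_simps)
      finally show ?thesis .
    qed
    define t where "t = tau + rho"
    have hal: "h \<le> 2 * al" using hb ba by linarith
    have hbe: "cR * h \<le> cR * (2 * be)" using hb by (intro mult_left_mono) auto
    have hal2: "cR * h \<le> cR * (2 * al)" using hal by (intro mult_left_mono) auto
    have btau: "\<bar>tau\<bar> \<le> 56 * L^2 * al"
    proof -
      have "\<bar>tau\<bar> \<le> \<bar>tau1\<bar> + \<bar>tau - tau1\<bar>" by linarith
      also have "\<dots> \<le> 8 * L * al + 48 * L^2 * be" using btau1 btt1 by (rule add_mono)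
      also have "\<dots> \<le> 8 * L^2 * al + 48 * L^2 * al"
        using Lp(1) ba by (intro add_mono mult_left_mono mult_right_mono) auto
      finally show ?thesis by (simp add: algebra_simps)
    qed
    have bt: "\<bar>t\<bar> \<le> cT * al"
    proof -
      have "\<bar>t\<bar> \<le> \<bar>tau\<bar> + \<bar>rho\<bar>" unfolding t_def by (rule abs_triangle_ineq)
      also have "\<dots> \<le> 56 * L^2 * al + cR * (2 * al)" using btau brho hal2 by linarith
      also have "\<dots> = cT * al" by (simp add: cT_def algebra_simps)
      finally show ?thesis .
    qed
    have bthalf: "\<bar>t\<bar> \<le> 1/2"
    proof -
      have "cT * al \<le> cT * (2 * r)" using alr by (intro mult_left_mono) auto
      also have "\<dots> \<le> cT * (2 * (1/(4*cT)))" using rT by (intro mult_left_mono) auto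
      also have "\<dots> = 1/2" using cT0 by (simp add: field_simps)
      finally show ?thesis using bt by linarith
    qed
    have ysq': "(norm (mexp A *v x))^2 = 1 + t" using ysq by (simp add: t_def)
    have ypos: "0 < norm (mexp A *v x)"
    proof -
      have "norm (mexp A *v x) \<noteq> 0" using ysq' bthalf by (auto simp: abs_le_iff)
      then show ?thesis by simp
    qed
    have lnY: "ln (norm (mexp A *v x)) = ln (1 + t) / 2"
      using ln_realpow[of "norm (mexp A *v x)" 2] ysq' by simp
    define F where "F = ln (1 + t) - t + t^2/2"
    have bF: "\<bar>F\<bar> \<le> (8 * cT^3) * h"
    proof -
      have "\<bar>F\<bar> \<le> 2 * \<bar>t\<bar>^3" unfolding F_def by (rule ln_taylor2[OF bthalf])
      also have "\<dots> \<le> 2 * (cT * al)^3" using bt by (intro mult_left_mono power_mono) auto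
      also have "\<dots> = 2 * cT^3 * al^3" by (simp add: power_mult_distrib)
      also have "\<dots> \<le> 2 * cT^3 * (4 * h)" using a3 by (intro mult_left_mono) auto
      finally show ?thesis by (simp add: mult_ac)
    qed
    define X where "X = (48*L^2+2*cR)*(cT+8*L)"
    have X0: "0 \<le> X" by (simp add: X_def)
    have bD: "\<bar>t^2 - tau1^2\<bar> \<le> (2 * X) * h"
    proof -
      have m: "\<bar>t - tau1\<bar> \<le> (48*L^2+2*cR) * be"
      proof -
        have "\<bar>t - tau1\<bar> \<le> \<bar>tau - tau1\<bar> + \<bar>rho\<bar>" unfolding t_def by linarith
        also have "\<dots> \<le> 48 * L^2 * be + cR * (2 * be)" using btt1 brho hbe by linarith
        finally show ?thesis by (simp add: algebra_simps)
      qed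
      have p: "\<bar>t + tau1\<bar> \<le> (cT + 8*L) * al"
      proof -
        have "\<bar>t + tau1\<bar> \<le> \<bar>t\<bar> + \<bar>tau1\<bar>" by (rule abs_triangle_ineq)
        also have "\<dots> \<le> cT * al + 8 * L * al" using bt btau1 by (rule add_mono)
        finally show ?thesis by (simp add: algebra_simps)
      qed
      have "\<bar>t^2 - tau1^2\<bar> = \<bar>t - tau1\<bar> * \<bar>t + tau1\<bar>"
        by (simp add: abs_mult[symmetric] power2_eq_square algebra_simps)
      also have "\<dots> \<le> ((48*L^2+2*cR) * be) * ((cT + 8*L) * al)" using m p by (intro mult_mono) auto
      also have "\<dots> = X * (al * be)" by (simp add: X_def algebra_simps)
      also have "\<dots> \<le> X * (2 * h)" using ab X0 by (intro mult_left_mono) auto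
      finally show ?thesis by (simp add: mult_ac)
    qed
    have ident: "ln (norm (mexp A *v x)) - (1/2) * (tau - tau1^2/2) = (F + rho - (t^2 - tau1^2)/2) / 2"
      unfolding lnY F_def t_def by (simp add: field_simps)
    have fin: "\<bar>ln (norm (mexp A *v x)) - (1/2) * (tau - tau1^2/2)\<bar> \<le> C * h"
    proof -
      have "\<bar>ln (norm (mexp A *v x)) - (1/2) * (tau - tau1^2/2)\<bar> \<le> ((8 * cT^3)/2 + cR + 2 * X) * h"
        unfolding ident by (rule comb[OF bF brho bD h0 cR0]) (simp add: X0)
      also have "\<dots> \<le> C * h"
      proof -
        have "(8 * cT^3)/2 + cR + 2 * X = C" by (simp add: C_def X_def)
        then show ?thesis by simp
      qed
      finally show ?thesis .
    qed
    show ?thesis using fin unfolding tauT tau1_def A_def h_def ppx_def px_def p'x_def qx_def Qd_def by simp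
  qed
  show ?thesis
    apply (rule exI[of _ C], rule exI[of _ r])
    using r0 r1 main by blast
qed


lemma ident_final:
  fixes x :: cvec and p1 p2 p3 p1' p2' p3' q1 q2 q3 e d :: real
  assumes nx: "norm x = 1"
  defines "P \<equiv> p1 *\<^sub>R B1 + p2 *\<^sub>R B2 + p3 *\<^sub>R B3"
    and "P' \<equiv> p1' *\<^sub>R B1 + p2' *\<^sub>R B2 + p3' *\<^sub>R B3"
    and "Q \<equiv> q1 *\<^sub>R B1 + q2 *\<^sub>R B2 + q3 *\<^sub>R B3"
  shows "(1/2) * ((2*e*inner x (P *v x) + 2*e^2*inner x (P' *v x) + 2*inner x (cscale (\<i> * of_real d) Q *v x)
            + e^2 * inner x (P *v (P *v x)) + e^2 * (norm (P *v x))^2) - (2*e*inner x (P *v x))^2/2)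
    = lemma6_main e d (complex_of_real p1 - \<i> * complex_of_real p2) (complex_of_real p1' - \<i> * complex_of_real p2') p3 q3 (proj x)"
proof -
  have n: "cmod (x$1)^2 + cmod (x$2)^2 = 1" using nx norm_cvec_sq[of x] by simp
  note ip = ident_poly[OF n, of e p1 p2 p3 p1' p2' p3' d q1 q2 q3, folded P_def P'_def Q_def]
  show ?thesis
  proof (cases "x$2 = 0")
    case True
    have a1: "cmod (x$1)^2 = 1" using n True by simp
    have a4: "cmod (x$1)^4 = 1" using a1 by (metis power_mult numeral_Bit0 mult_2_right one_power2)
    show ?thesis unfolding ip using True a4 a1 by (simp add: proj_def lemma6_main_def)
  next
    case False
    have "proj x = Some (x$1 / x$2)" using False by (simp add: proj_def)
    then show ?thesis unfolding ip using main_poly[OF n False] by simp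
  qed
qed


theorem lemma6:
  fixes P :: "'s measure"
    and T :: "real \<Rightarrow> complex \<Rightarrow> 's \<Rightarrow> cmat"
    and eta :: "'s \<Rightarrow> real"
    and PP PP' QQ :: "'s \<Rightarrow> cmat"
    and p1 p2 p3 p1' p2' p3' q1 q2 q3 :: "'s \<Rightarrow> real"
    and r0 :: real
  assumes prob: "prob_space P"
    and r0: "r0 > 0"
    and meas: "\<And>e d. \<bar>e\<bar> < r0 \<Longrightarrow> \<bar>d\<bar> < r0 \<Longrightarrow> (\<lambda>s. T e (of_real d) s) \<in> borel_measurable P"
    and C2: "\<And>s. s \<in> space P \<Longrightarrow>
               C2_on ({-r0<..<r0} \<times> {-r0<..<r0}) (\<lambda>(e, d). T e (of_real d) s)"
    and T00: "\<And>s. s \<in> space P \<Longrightarrow> T 0 0 s = Rot (eta s)"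
    and Te0: "\<And>s e. s \<in> space P \<Longrightarrow> \<bar>e\<bar> < r0 \<Longrightarrow> T e 0 s \<in> SU11"
    and T0d: "\<And>s d. s \<in> space P \<Longrightarrow> \<bar>d\<bar> < r0 \<Longrightarrow> T 0 (\<i> * of_real d) s \<in> SU11"
    and Tle: "\<And>s e d. s \<in> space P \<Longrightarrow> \<bar>e\<bar> < r0 \<Longrightarrow> 0 \<le> d \<Longrightarrow> d < r0 \<Longrightarrow>
               T e (of_real d) s \<in> SU11_le"
    and P_su: "\<And>s. s \<in> space P \<Longrightarrow> PP s \<in> su11 \<and> PP' s \<in> su11 \<and> QQ s \<in> su11"
    and P_dec: "\<And>s. s \<in> space P \<Longrightarrow> PP s = p1 s *\<^sub>R B1 + p2 s *\<^sub>R B2 + p3 s *\<^sub>R B3"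
    and P'_dec: "\<And>s. s \<in> space P \<Longrightarrow> PP' s = p1' s *\<^sub>R B1 + p2' s *\<^sub>R B2 + p3' s *\<^sub>R B3"
    and Q_dec: "\<And>s. s \<in> space P \<Longrightarrow> QQ s = q1 s *\<^sub>R B1 + q2 s *\<^sub>R B2 + q3 s *\<^sub>R B3"
    and bnd: "\<exists>K. \<forall>s\<in>space P. norm (PP s) \<le> K \<and> norm (PP' s) \<le> K \<and> norm (QQ s) \<le> K"
    and expansion: "\<exists>C. \<forall>s\<in>space P. \<forall>e d. \<bar>e\<bar> < r0 \<longrightarrow> \<bar>d\<bar> < r0 \<longrightarrow>
               (\<exists>E. T e (of_real d) s
                      = Rot (eta s) ** mexp (e *\<^sub>R PP s + e\<^sup>2 *\<^sub>R PP' s + cscale (\<i> * of_real d) (QQ s) + E)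
                    \<and> norm E \<le> C * (\<bar>e\<bar>^3 + \<bar>e\<bar> * \<bar>d\<bar> + d\<^sup>2))"
    and irred: "\<And>e d. \<bar>e\<bar> < r0 \<Longrightarrow> \<bar>d\<bar> < r0 \<Longrightarrow> (e, d) \<noteq> (0, 0) \<Longrightarrow>
               \<not> (\<exists>F. finite F \<and> F \<noteq> {} \<and>
                    (\<forall>A\<in>supp_law P (\<lambda>s. T e (of_real d) s). \<forall>w\<in>F. moeb A w \<in> F))"
    and noncpt: "\<And>e d. \<bar>e\<bar> < r0 \<Longrightarrow> \<bar>d\<bar> < r0 \<Longrightarrow> (e, d) \<noteq> (0, 0) \<Longrightarrow>
               \<not> compact (closure (semigrp (supp_law P (\<lambda>s. T e (of_real d) s))))"
  shows "\<exists>C r. r > 0 \<and> (\<forall>s\<in>space P. \<forall>e d. \<forall>x::cvec.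
            \<bar>e\<bar> < r \<longrightarrow> \<bar>d\<bar> < r \<longrightarrow> norm x = 1 \<longrightarrow>
            \<bar>ln (norm (T e (of_real d) s *v x))
              - lemma6_main e d (complex_of_real (p1 s) - \<i> * complex_of_real (p2 s))
                    (complex_of_real (p1' s) - \<i> * complex_of_real (p2' s)) (p3 s) (q3 s) (proj x)\<bar>
            \<le> C * (\<bar>e\<bar>^3 + \<bar>e\<bar> * \<bar>d\<bar> + d\<^sup>2))"
proof -
  obtain K0 where K0: "\<forall>s\<in>space P. norm (PP s) \<le> K0 \<and> norm (PP' s) \<le> K0 \<and> norm (QQ s) \<le> K0"
    using bnd by blast
  define K where "K = max K0 0"
  have K: "0 \<le> K" by (simp add: K_def)
  have KP: "norm (PP s) \<le> K" "norm (PP' s) \<le> K" "norm (QQ s) \<le> K" if "s \<in> space P" for s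
    using K0 that by (auto simp: K_def le_max_iff_disj)
  obtain C00 where C00: "\<forall>s\<in>space P. \<forall>e d. \<bar>e\<bar> < r0 \<longrightarrow> \<bar>d\<bar> < r0 \<longrightarrow>
               (\<exists>E. T e (of_real d) s
                      = Rot (eta s) ** mexp (e *\<^sub>R PP s + e\<^sup>2 *\<^sub>R PP' s + cscale (\<i> * of_real d) (QQ s) + E)
                    \<and> norm E \<le> C00 * (\<bar>e\<bar>^3 + \<bar>e\<bar> * \<bar>d\<bar> + d\<^sup>2))"
    using expansion by blast
  define C0 where "C0 = max C00 0"
  have C0: "0 \<le> C0" by (simp add: C0_def)
  obtain C r where r: "0 < r" "r \<le> 1" and cr: "\<forall>P P' Q E (x::cvec) e d. norm P \<le> K \<longrightarrow> norm P' \<le> K \<longrightarrow> norm Q \<le> K \<longrightarrow>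
     norm E \<le> C0 * (\<bar>e\<bar>^3 + \<bar>e\<bar> * \<bar>d\<bar> + d\<^sup>2) \<longrightarrow> norm x = 1 \<longrightarrow> \<bar>e\<bar> \<le> r \<longrightarrow> \<bar>d\<bar> \<le> r \<longrightarrow>
     \<bar>ln (norm (mexp (e *\<^sub>R P + e\<^sup>2 *\<^sub>R P' + cscale (\<i> * of_real d) Q + E) *v x))
       - (1/2) * ((2*e*inner x (P *v x) + 2*e^2*inner x (P' *v x) + 2*inner x (cscale (\<i> * of_real d) Q *v x)
            + e^2 * inner x (P *v (P *v x)) + e^2 * (norm (P *v x))^2) - (2*e*inner x (P *v x))^2/2)\<bar>
     \<le> C * (\<bar>e\<bar>^3 + \<bar>e\<bar> * \<bar>d\<bar> + d\<^sup>2)"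
    using core[OF K C0] by blast
  define rr where "rr = min r r0"
  have rr: "0 < rr" using r r0 by (simp add: rr_def)
  have main: "\<bar>ln (norm (T e (of_real d) s *v x))
              - lemma6_main e d (complex_of_real (p1 s) - \<i> * complex_of_real (p2 s))
                    (complex_of_real (p1' s) - \<i> * complex_of_real (p2' s)) (p3 s) (q3 s) (proj x)\<bar>
            \<le> C * (\<bar>e\<bar>^3 + \<bar>e\<bar> * \<bar>d\<bar> + d\<^sup>2)"
    if s: "s \<in> space P" and e: "\<bar>e\<bar> < rr" and d: "\<bar>d\<bar> < rr" and nx: "norm x = 1" for s e d and x :: cvec
  proof -
    define h where "h = \<bar>e\<bar>^3 + \<bar>e\<bar> * \<bar>d\<bar> + d\<^sup>2"
    have h0: "0 \<le> h" by (simp add: h_def)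
    have er0: "\<bar>e\<bar> < r0" and dr0: "\<bar>d\<bar> < r0" using e d by (auto simp: rr_def)
    obtain E where TE: "T e (of_real d) s = Rot (eta s) ** mexp (e *\<^sub>R PP s + e\<^sup>2 *\<^sub>R PP' s + cscale (\<i> * of_real d) (QQ s) + E)"
      and nE: "norm E \<le> C00 * h"
      using C00 s er0 dr0 unfolding h_def by blast
    have nE': "norm E \<le> C0 * h" using nE mult_right_mono[OF max.cobounded1[of C00 0] h0] by (simp add: C0_def)
    have nT: "norm (T e (of_real d) s *v x) = norm (mexp (e *\<^sub>R PP s + e\<^sup>2 *\<^sub>R PP' s + cscale (\<i> * of_real d) (QQ s) + E) *v x)"
      unfolding TE by (simp add: matrix_vector_mul_assoc[symmetric] rot_norm)
    have er: "\<bar>e\<bar> \<le> r" and dr: "\<bar>d\<bar> \<le> r" using e d by (auto simp: rr_def)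
    have ci: "\<bar>ln (norm (mexp (e *\<^sub>R PP s + e\<^sup>2 *\<^sub>R PP' s + cscale (\<i> * of_real d) (QQ s) + E) *v x))
       - (1/2) * ((2*e*inner x (PP s *v x) + 2*e^2*inner x (PP' s *v x) + 2*inner x (cscale (\<i> * of_real d) (QQ s) *v x)
            + e^2 * inner x (PP s *v (PP s *v x)) + e^2 * (norm (PP s *v x))^2) - (2*e*inner x (PP s *v x))^2/2)\<bar>
     \<le> C * h"
      using cr KP[OF s] nE' nx er dr unfolding h_def by blast
    have idf: "(1/2) * ((2*e*inner x (PP s *v x) + 2*e^2*inner x (PP' s *v x) + 2*inner x (cscale (\<i> * of_real d) (QQ s) *v x)
            + e^2 * inner x (PP s *v (PP s *v x)) + e^2 * (norm (PP s *v x))^2) - (2*e*inner x (PP s *v x))^2/2)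
       = lemma6_main e d (complex_of_real (p1 s) - \<i> * complex_of_real (p2 s))
                    (complex_of_real (p1' s) - \<i> * complex_of_real (p2' s)) (p3 s) (q3 s) (proj x)"
      unfolding P_dec[OF s] P'_dec[OF s] Q_dec[OF s] by (rule ident_final[OF nx])
    show ?thesis using ci unfolding idf nT h_def .
  qed
  show ?thesis
    using rr main by blast
qed


end
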